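(* Let $R\in\operatorname{Ob}(\hat{\mathcal C})$, $G=\mathrm{SL}_2(R)$, $\bar\rho:G\to\mathrm{GL}_2(k)$ induced by reduction, and $S\in\operatorname{Ob}(\hat{\mathcal C})$. For $a\in\mu_R$ let $a_S\in\mu_S$ be the unique element of $\mu_S$ with the same image in $k$ as $a$. Then every deformation of $\bar\rho$ to $S$ has a representative $\rho$ with $\rho\big(\mathrm{diag}(a,a^{-1})\big)=\mathrm{diag}(a_S,a_S^{-1})$ for all $a\in\mu_R$.
   Context: Let $k$ be a finite field. $\hat{\mathcal C}$ is the category of complete noetherian local commutative rings with residue field $k$, with local homomorphisms inducing the identity on $k$; $\mathfrak m_S$ is the maximal ideal of $S$. For $S\in\hat{\mathcal C}$, $\mu_S=\{x\in S: x^{\#k-1}=1\}$ (the Teichmüller lifts of $k^\times$), which maps bijectively onto $k^\times$. For a profinite group $G$ and continuous $\bar\rho:G\to\mathrm{GL}_n(k)$, a lift to $S$ is a continuous $\rho:G\to\mathrm{GL}_n(S)$ reducing to $\bar\rho$; lifts are strictly equivalent if conjugate by an element of $I+M_n(\mathfrak m_S)$; a deformation is a strict equivalence class. *)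

theory Defs
  imports "HOL-Analysis.Analysis"
begin

definition is_ideal :: "('a::comm_ring_1) set \<Rightarrow> bool" where
  "is_ideal I \<longleftrightarrow> 0 \<in> I \<and> (\<forall>x\<in>I. \<forall>y\<in>I. x + y \<in> I) \<and> (\<forall>r. \<forall>x\<in>I. r * x \<in> I)"

definition ideal_gen :: "('a::comm_ring_1) set \<Rightarrow> 'a set" where
  "ideal_gen F = {\<Sum>i<n. c i * x i | (n::nat) (c::nat \<Rightarrow> 'a) (x::nat \<Rightarrow> 'a). \<forall>i<n. x i \<in> F}"

definition finitely_generated_ideal :: "('a::comm_ring_1) set \<Rightarrow> bool" where
  "finitely_generated_ideal I \<longleftrightarrow> (\<exists>F. finite F \<and> F \<subseteq> I \<and> I = ideal_gen F)"

definition noetherian_ring :: "'a::comm_ring_1 itself \<Rightarrow> bool" where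
  "noetherian_ring _ \<longleftrightarrow> (\<forall>I::'a set. is_ideal I \<longrightarrow> finitely_generated_ideal I)"

fun ideal_pow :: "('a::comm_ring_1) set \<Rightarrow> nat \<Rightarrow> 'a set" where
  "ideal_pow I 0 = UNIV"
| "ideal_pow I (Suc n) = ideal_gen {x * y | x y. x \<in> I \<and> y \<in> ideal_pow I n}"

definition adically_complete :: "('a::comm_ring_1) set \<Rightarrow> bool" where
  "adically_complete I \<longleftrightarrow>
     (\<Inter>n. ideal_pow I n) = {0} \<and>
     (\<forall>x::nat \<Rightarrow> 'a. (\<forall>n. \<exists>N. \<forall>i\<ge>N. \<forall>j\<ge>N. x i - x j \<in> ideal_pow I n) \<longrightarrow>
        (\<exists>L. \<forall>n. \<exists>N. \<forall>i\<ge>N. x i - L \<in> ideal_pow I n))"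

definition ring_hom_to :: "('a::comm_ring_1 \<Rightarrow> 'k::field) \<Rightarrow> bool" where
  "ring_hom_to \<pi> \<longleftrightarrow> \<pi> 1 = 1 \<and> (\<forall>x y. \<pi> (x + y) = \<pi> x + \<pi> y) \<and> (\<forall>x y. \<pi> (x * y) = \<pi> x * \<pi> y)"

definition max_ideal :: "('a::comm_ring_1 \<Rightarrow> 'k::field) \<Rightarrow> 'a set" where
  "max_ideal \<pi> = {x. \<pi> x = 0}"

text \<open>(R, \<pi>) is a complete noetherian local ring with residue field k, the residue map being
  \<pi> : R \<rightarrow> k (surjective ring hom whose kernel is the unique maximal ideal, i.e. every element
  outside the kernel is a unit).\<close>
definition Chat_obj :: "('a::comm_ring_1 \<Rightarrow> 'k::{field,finite}) \<Rightarrow> bool" where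
  "Chat_obj \<pi> \<longleftrightarrow> ring_hom_to \<pi> \<and> surj \<pi> \<and>
     (\<forall>x. \<pi> x \<noteq> 0 \<longrightarrow> (\<exists>y. x * y = 1)) \<and>
     noetherian_ring TYPE('a) \<and> adically_complete (max_ideal \<pi>)"

definition mu :: "'k::finite itself \<Rightarrow> ('a::comm_ring_1) set" where
  "mu _ = {x::'a. x ^ (CARD('k) - 1) = 1}"

definition teich_transfer :: "('r::comm_ring_1 \<Rightarrow> 'k::{field,finite}) \<Rightarrow> ('s::comm_ring_1 \<Rightarrow> 'k) \<Rightarrow> 'r \<Rightarrow> 's" where
  "teich_transfer \<pi>R \<pi>S a = (THE b. b \<in> (mu TYPE('k) :: 's set) \<and> \<pi>S b = \<pi>R a)"

definition ring_inv :: "'a::comm_ring_1 \<Rightarrow> 'a" where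
  "ring_inv x = (THE y. x * y = 1)"

definition SL2 :: "('a::comm_ring_1^2^2) set" where
  "SL2 = {A. det A = 1}"

definition GL2 :: "('a::comm_ring_1^2^2) set" where
  "GL2 = {A. invertible A}"

definition diag2 :: "'a::comm_ring_1 \<Rightarrow> 'a \<Rightarrow> 'a^2^2" where
  "diag2 a b = (\<chi> i j. if i = j then (if i = 1 then a else b) else 0)"

definition mat_map :: "('a \<Rightarrow> 'b) \<Rightarrow> 'a^'n^'m \<Rightarrow> 'b^'n^'m" where
  "mat_map f A = (\<chi> i j. f (A $ i $ j))"

definition mat_cong :: "('a::comm_ring_1) set \<Rightarrow> 'a^'n^'m \<Rightarrow> 'a^'n^'m \<Rightarrow> bool" where
  "mat_cong I A B \<longleftrightarrow> (\<forall>i j. A $ i $ j - B $ i $ j \<in> I)"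

text \<open>rho : SL_2(R) \<rightarrow> GL_2(S) is a continuous homomorphism (for the m_R-adic, resp.
  m_S-adic topologies) reducing to the representation rhobar : SL_2(R) \<rightarrow> GL_2(k)
  induced by reduction.\<close>
definition is_lift :: "('r::comm_ring_1 \<Rightarrow> 'k::{field,finite}) \<Rightarrow> ('s::comm_ring_1 \<Rightarrow> 'k)
    \<Rightarrow> ('r^2^2 \<Rightarrow> 's^2^2) \<Rightarrow> bool" where
  "is_lift \<pi>R \<pi>S \<rho> \<longleftrightarrow>
     (\<forall>g\<in>SL2. \<rho> g \<in> GL2) \<and>
     (\<forall>g\<in>SL2. \<forall>h\<in>SL2. \<rho> (g ** h) = \<rho> g ** \<rho> h) \<and>
     (\<forall>g\<in>SL2. \<forall>n. \<exists>m. \<forall>h\<in>SL2. mat_cong (ideal_pow (max_ideal \<pi>R) m) h g \<longrightarrow>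
         mat_cong (ideal_pow (max_ideal \<pi>S) n) (\<rho> h) (\<rho> g)) \<and>
     (\<forall>g\<in>SL2. mat_map \<pi>S (\<rho> g) = mat_map \<pi>R g)"

definition strictly_equiv :: "('s::comm_ring_1 \<Rightarrow> 'k::{field,finite})
    \<Rightarrow> ('r::comm_ring_1^2^2 \<Rightarrow> 's^2^2) \<Rightarrow> ('r^2^2 \<Rightarrow> 's^2^2) \<Rightarrow> bool" where
  "strictly_equiv \<pi>S \<rho> \<rho>' \<longleftrightarrow>
     (\<exists>P Q. P ** Q = mat 1 \<and> Q ** P = mat 1 \<and> mat_cong (max_ideal \<pi>S) P (mat 1) \<and>
        (\<forall>g\<in>SL2. \<rho>' g = P ** \<rho> g ** Q))"

end

theory Submission imports Defs begin

lemma rh_1: "ring_hom_to \<pi> \<Longrightarrow> \<pi> 1 = 1" by (simp add: ring_hom_to_def)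
lemma rh_add: "ring_hom_to \<pi> \<Longrightarrow> \<pi> (x + y) = \<pi> x + \<pi> y" by (simp add: ring_hom_to_def)
lemma rh_mult: "ring_hom_to \<pi> \<Longrightarrow> \<pi> (x * y) = \<pi> x * \<pi> y" by (simp add: ring_hom_to_def)
lemma rh_0: "ring_hom_to \<pi> \<Longrightarrow> \<pi> 0 = 0"
proof -
  assume h: "ring_hom_to \<pi>"
  have "\<pi> 0 + \<pi> 0 = \<pi> 0 + 0" using rh_add[OF h, of 0 0] by simp
  thus ?thesis by (rule add_left_imp_eq)
qed
lemma rh_uminus: "ring_hom_to \<pi> \<Longrightarrow> \<pi> (- x) = - \<pi> x"
  using rh_add[of \<pi> x "-x"] rh_0[of \<pi>] by (simp add: add_eq_0_iff2)
lemma rh_diff: "ring_hom_to \<pi> \<Longrightarrow> \<pi> (x - y) = \<pi> x - \<pi> y"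
  using rh_add[of \<pi> x "-y"] rh_uminus[of \<pi> y] by simp
lemma rh_power: "ring_hom_to \<pi> \<Longrightarrow> \<pi> (x ^ n) = \<pi> x ^ n"
  by (induction n) (simp_all add: rh_1 rh_mult)
lemma rh_of_nat: "ring_hom_to \<pi> \<Longrightarrow> \<pi> (of_nat n) = of_nat n"
  by (induction n) (simp_all add: rh_1 rh_add rh_0)
lemma rh_sum: "ring_hom_to \<pi> \<Longrightarrow> \<pi> (sum f A) = sum (\<lambda>x. \<pi> (f x)) A"
  by (induction A rule: infinite_finite_induct) (simp_all add: rh_0 rh_add)

section \<open>Ideals\<close>

lemma ideal_gen_0: "0 \<in> ideal_gen F"
  unfolding ideal_gen_def by (rule CollectI, rule exI[of _ 0]) auto

lemma ideal_gen_gen: "x \<in> F \<Longrightarrow> r * x \<in> ideal_gen F"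
  unfolding ideal_gen_def
  by (rule CollectI, rule exI[of _ 1], rule exI[of _ "\<lambda>_. r"], rule exI[of _ "\<lambda>_. x"]) auto

lemma ideal_gen_add1:
  assumes "a \<in> ideal_gen F" "x0 \<in> F"
  shows "a + c0 * x0 \<in> ideal_gen F"
proof -
  from assms(1) obtain n :: nat and c x where a: "a = (\<Sum>i<n. c i * x i)" and x: "\<forall>i<n. x i \<in> F"
    unfolding ideal_gen_def by blast
  have "a + c0 * x0 = (\<Sum>i<Suc n. (c(n:=c0)) i * (x(n:=x0)) i)"
    by (simp add: a)
  moreover have "\<forall>i<Suc n. (x(n:=x0)) i \<in> F" using x assms(2) by (simp add: less_Suc_eq)
  ultimately show ?thesis unfolding ideal_gen_def by blast
qed

lemma ideal_gen_add:
  assumes "a \<in> ideal_gen F" "b \<in> ideal_gen F"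
  shows "a + b \<in> ideal_gen F"
proof -
  from assms(2) obtain m :: nat and c x where b: "b = (\<Sum>i<m. c i * x i)" and x: "\<forall>i<m. x i \<in> F"
    unfolding ideal_gen_def by blast
  have "\<forall>k\<le>m. a + (\<Sum>i<k. c i * x i) \<in> ideal_gen F"
  proof (intro allI impI)
    fix k assume "k \<le> m" thus "a + (\<Sum>i<k. c i * x i) \<in> ideal_gen F"
    proof (induction k)
      case 0 thus ?case using assms(1) by simp
    next
      case (Suc k)
      hence "a + (\<Sum>i<k. c i * x i) \<in> ideal_gen F" by simp
      moreover have "x k \<in> F" using x Suc.prems by simp
      ultimately have "a + (\<Sum>i<k. c i * x i) + c k * x k \<in> ideal_gen F"
        by (rule ideal_gen_add1)
      thus ?case by (simp add: add.assoc)
    qed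
  qed
  thus ?thesis using b by auto
qed

lemma ideal_gen_mult:
  assumes "a \<in> ideal_gen F" shows "r * a \<in> ideal_gen F"
proof -
  from assms obtain n :: nat and c x where a: "a = (\<Sum>i<n. c i * x i)" and x: "\<forall>i<n. x i \<in> F"
    unfolding ideal_gen_def by blast
  have "r * a = (\<Sum>i<n. (\<lambda>i. r * c i) i * x i)" by (simp add: a sum_distrib_left mult.assoc)
  thus ?thesis using x unfolding ideal_gen_def
    by (intro CollectI exI[of _ n] exI[of _ "\<lambda>i. r * c i"] exI[of _ x]) auto
qed

lemma is_ideal_gen: "is_ideal (ideal_gen F)"
  unfolding is_ideal_def using ideal_gen_0 ideal_gen_add ideal_gen_mult by blast

lemma is_ideal_pow: "is_ideal (ideal_pow I n)"
proof (cases n)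
  case 0 thus ?thesis by (simp add: is_ideal_def)
next
  case (Suc m) thus ?thesis by (simp add: is_ideal_gen)
qed

lemma ideal_gen_sub: "is_ideal J \<Longrightarrow> F \<subseteq> J \<Longrightarrow> ideal_gen F \<subseteq> J"
proof
  fix a assume J: "is_ideal J" "F \<subseteq> J" and a0: "a \<in> ideal_gen F"
  from a0 obtain n :: nat and c x where a: "a = (\<Sum>i<n. c i * x i)" and x: "\<forall>i<n. x i \<in> F"
    unfolding ideal_gen_def by blast
  have "\<forall>k\<le>n. (\<Sum>i<k. c i * x i) \<in> J"
  proof (intro allI impI)
    fix k assume "k \<le> n" thus "(\<Sum>i<k. c i * x i) \<in> J"
    proof (induction k)
      case 0 thus ?case using J by (simp add: is_ideal_def)
    next
      case (Suc k)
      hence "x k \<in> J" using x J by auto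
      hence "c k * x k \<in> J" using J by (simp add: is_ideal_def)
      thus ?case using Suc J by (simp add: is_ideal_def)
    qed
  qed
  thus "a \<in> J" using a by auto
qed

lemma ideal_neg: "is_ideal J \<Longrightarrow> x \<in> J \<Longrightarrow> - x \<in> J"
proof -
  assume "is_ideal J" "x \<in> J"
  hence "(-1) * x \<in> J" unfolding is_ideal_def by blast
  thus ?thesis by simp
qed
lemma ideal_diff: "is_ideal J \<Longrightarrow> x \<in> J \<Longrightarrow> y \<in> J \<Longrightarrow> x - y \<in> J"
proof -
  assume "is_ideal J" "x \<in> J" "y \<in> J"
  hence "x + (- y) \<in> J" using ideal_neg[of J y] unfolding is_ideal_def by blast
  thus ?thesis by simp
qed
lemma ideal_add: "is_ideal J \<Longrightarrow> x \<in> J \<Longrightarrow> y \<in> J \<Longrightarrow> x + y \<in> J"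
  unfolding is_ideal_def by blast
lemma ideal_mult: "is_ideal J \<Longrightarrow> x \<in> J \<Longrightarrow> r * x \<in> J"
  unfolding is_ideal_def by blast
lemma ideal_mult2: "is_ideal J \<Longrightarrow> x \<in> J \<Longrightarrow> x * r \<in> J"
  unfolding is_ideal_def by (simp add: mult.commute)

lemma ideal_pow_Suc_sub: "ideal_pow I (Suc n) \<subseteq> ideal_pow I n"
proof -
  have "{x * y |x y. x \<in> I \<and> y \<in> ideal_pow I n} \<subseteq> ideal_pow I n"
    using ideal_mult[OF is_ideal_pow] by blast
  thus ?thesis by (simp add: ideal_gen_sub[OF is_ideal_pow])
qed

lemma ideal_pow_mono: "m \<le> n \<Longrightarrow> ideal_pow I n \<subseteq> ideal_pow I m"
proof (induction n rule: dec_induct)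
  case base thus ?case by simp
next
  case (step k) thus ?case using ideal_pow_Suc_sub[of I k] by blast
qed

lemma ideal_pow_Suc_mem: "x \<in> I \<Longrightarrow> y \<in> ideal_pow I n \<Longrightarrow> x * y \<in> ideal_pow I (Suc n)"
proof -
  assume "x \<in> I" "y \<in> ideal_pow I n"
  hence "x*y \<in> {x*y |x y. x\<in>I \<and> y \<in> ideal_pow I n}" by blast
  hence "1*(x*y) \<in> ideal_gen {x*y |x y. x\<in>I \<and> y \<in> ideal_pow I n}" by (rule ideal_gen_gen)
  thus ?thesis by simp
qed

lemma ideal_pow_1_sub: "is_ideal I \<Longrightarrow> ideal_pow I 1 \<subseteq> I"
proof -
  assume I: "is_ideal I"
  have "{x * y |x y. x \<in> I \<and> y \<in> ideal_pow I 0} \<subseteq> I"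
    using ideal_mult2[OF I] by blast
  thus ?thesis by (simp add: ideal_gen_sub[OF I])
qed

lemma ideal_pow_1_sup: "x \<in> I \<Longrightarrow> x \<in> ideal_pow I 1"
  using ideal_pow_Suc_mem[of x I 1 0] by simp

lemma is_ideal_max: "ring_hom_to \<pi> \<Longrightarrow> is_ideal (max_ideal \<pi>)"
  by (simp add: is_ideal_def max_ideal_def rh_0 rh_add rh_mult)

lemma max_ideal_iff: "ring_hom_to \<pi> \<Longrightarrow> x - y \<in> max_ideal \<pi> \<longleftrightarrow> \<pi> x = \<pi> y"
  by (simp add: max_ideal_def rh_diff)



section \<open>Finite fields\<close>

lemma card_field_ge2: "CARD('k::{field,finite}) \<ge> 2"
proof -
  have "{0::'k, 1} \<subseteq> UNIV" by simp
  hence "card {0::'k,1} \<le> CARD('k)" by (intro card_mono) auto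
  thus ?thesis by simp
qed

lemma char_field_card: "of_nat CARD('k::{field,finite}) = (0::'k)"
proof -
  have "(\<Sum>x\<in>(UNIV::'k set). x + 1) = (\<Sum>x\<in>UNIV. x)"
    by (rule sum.reindex_bij_witness[of _ "\<lambda>x. x - 1" "\<lambda>x. x + 1"]) auto
  hence "(\<Sum>x\<in>(UNIV::'k set). x) + of_nat CARD('k) = (\<Sum>x\<in>UNIV. x)"
    by (simp add: sum.distrib)
  thus ?thesis by simp
qed

lemma of_nat_card_minus1: "of_nat (CARD('k::{field,finite}) - 1) = (-1::'k)"
proof -
  have "CARD('k) = (CARD('k) - 1) + 1" using card_field_ge2[where 'k='k] by simp
  hence "of_nat (CARD('k)) = of_nat (CARD('k) - 1) + (1::'k)" by (metis of_nat_Suc Suc_eq_plus1 add.commute)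
  thus ?thesis using char_field_card[where 'k='k] by (simp add: eq_neg_iff_add_eq_0)
qed

lemma fermat_field:
  fixes l :: "'k::{field,finite}"
  assumes "l \<noteq> 0" shows "l ^ (CARD('k) - 1) = 1"
proof -
  let ?U = "{x::'k. x \<noteq> 0}"
  have cU: "card ?U = CARD('k) - 1"
  proof -
    have "?U = UNIV - {0}" by auto
    thus ?thesis by (simp add: card_Diff_subset)
  qed
  have bij: "bij_betw (\<lambda>x. l * x) ?U ?U"
    by (rule bij_betw_byWitness[of _ "\<lambda>x. x / l"]) (use assms in auto)
  have "(\<Prod>x\<in>?U. l * x) = (\<Prod>x\<in>?U. x)"
    using prod.reindex_bij_betw[OF bij, of "\<lambda>x. x"] by simp
  hence eq: "l ^ card ?U * (\<Prod>x\<in>?U. x) = 1 * (\<Prod>x\<in>?U. x)"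
    by (simp add: prod.distrib)
  have nz: "(\<Prod>x\<in>?U. x) \<noteq> 0" by (subst prod_zero_iff) auto
  have "l ^ card ?U = 1" using mult_right_cancel[OF nz] eq by blast
  thus ?thesis unfolding cU .
qed

lemma chat_hom: "Chat_obj \<pi> \<Longrightarrow> ring_hom_to \<pi>" by (simp add: Chat_obj_def)
lemma chat_unit: "Chat_obj \<pi> \<Longrightarrow> \<pi> x \<noteq> 0 \<Longrightarrow> \<exists>y. x * y = 1" by (simp add: Chat_obj_def)
lemma chat_surj: "Chat_obj \<pi> \<Longrightarrow> \<exists>x. \<pi> x = l" by (metis Chat_obj_def surj_def)
lemma chat_compl: "Chat_obj \<pi> \<Longrightarrow> adically_complete (max_ideal \<pi>)" by (simp add: Chat_obj_def)

lemma binom_expand: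
  fixes x h :: "'a::comm_ring_1"
  shows "\<exists>r. (x + h) ^ n = x ^ n + of_nat n * x ^ (n - 1) * h + h^2 * r"
proof (induction n)
  case 0 show ?case by (rule exI[of _ 0]) simp
next
  case (Suc n)
  then obtain r where r: "(x + h) ^ n = x ^ n + of_nat n * x ^ (n - 1) * h + h^2 * r" by blast
  have xx: "x * (of_nat n * x ^ (n - 1)) = of_nat n * x ^ n"
    by (cases n) (simp_all add: algebra_simps)
  have "(x + h) ^ Suc n = (x + h) * (x ^ n + of_nat n * x ^ (n - 1) * h + h^2 * r)"
    by (simp add: r)
  also have "\<dots> = x ^ Suc n + of_nat (Suc n) * x ^ (Suc n - 1) * h
        + h^2 * (of_nat n * x ^ (n - 1) + r * (x + h))"
    using xx by (simp add: algebra_simps power2_eq_square)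
  finally show ?case by blast
qed

lemma newton_step:
  fixes \<pi> :: "'a::comm_ring_1 \<Rightarrow> 'k::{field,finite}"
  assumes C: "Chat_obj \<pi>" and px: "\<pi> x \<noteq> 0" and j: "j \<ge> 1"
    and e: "x ^ (CARD('k) - 1) - 1 \<in> ideal_pow (max_ideal \<pi>) j"
  shows "\<exists>x'. \<pi> x' = \<pi> x \<and> x' - x \<in> ideal_pow (max_ideal \<pi>) j \<and>
           x' ^ (CARD('k) - 1) - 1 \<in> ideal_pow (max_ideal \<pi>) (Suc j)"
proof -
  let ?n = "CARD('k) - 1" and ?m = "max_ideal \<pi>"
  have H: "ring_hom_to \<pi>" using C by (rule chat_hom)
  have I: "is_ideal ?m" using H by (rule is_ideal_max)
  define ee where "ee = x ^ ?n - 1"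
  have em: "ee \<in> ?m" using e ideal_pow_mono[OF j, of ?m] ideal_pow_1_sub[OF I] unfolding ee_def by blast
  define w where "w = of_nat ?n * x ^ (?n - 1)"
  have pn: "\<pi> (of_nat ?n) = -1" by (simp only: rh_of_nat[OF H] of_nat_card_minus1)
  have "\<pi> w = - (\<pi> x ^ (?n - 1))"
    unfolding w_def rh_mult[OF H] pn rh_power[OF H] by simp
  hence "\<pi> w \<noteq> 0" using px by simp
  then obtain u where u: "w * u = 1" using chat_unit[OF C] by blast
  define h where "h = - (u * ee)"
  have hj: "h \<in> ideal_pow ?m j" unfolding h_def ee_def
    using e ideal_mult[OF is_ideal_pow] ideal_neg[OF is_ideal_pow] by blast
  have hm: "h \<in> ?m" unfolding h_def using em ideal_mult[OF I] ideal_neg[OF I] by blast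
  obtain r where r: "(x + h) ^ ?n = x ^ ?n + w * h + h^2 * r"
    using binom_expand[of x h ?n] unfolding w_def by blast
  have wh: "w * h = - ee" unfolding h_def using u by (simp add: mult.assoc[symmetric])
  have "(x + h) ^ ?n = x ^ ?n - ee + h^2 * r" using r wh by simp
  also have "x ^ ?n - ee = 1" unfolding ee_def by simp
  finally have "(x + h) ^ ?n - 1 = (h * r) * h"
    by (simp add: power2_eq_square mult.commute mult.left_commute)
  moreover have "h * r \<in> ?m" using hm ideal_mult2[OF I] by blast
  ultimately have "(x + h) ^ ?n - 1 \<in> ideal_pow ?m (Suc j)"
    using ideal_pow_Suc_mem[OF _ hj] by simp
  moreover have "\<pi> (x + h) = \<pi> x" using hm by (simp add: rh_add[OF H] max_ideal_def)
  moreover have "(x + h) - x \<in> ideal_pow ?m j" using hj by simp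
  ultimately show ?thesis by blast
qed



lemma teich_exists:
  fixes \<pi> :: "'a::comm_ring_1 \<Rightarrow> 'k::{field,finite}"
  assumes C: "Chat_obj \<pi>" and l: "l \<noteq> 0"
  shows "\<exists>b. b ^ (CARD('k) - 1) = 1 \<and> \<pi> b = l"
proof -
  let ?n = "CARD('k) - 1" and ?m = "max_ideal \<pi>"
  have H: "ring_hom_to \<pi>" using C by (rule chat_hom)
  have I: "is_ideal ?m" using H by (rule is_ideal_max)
  define P where "P = (\<lambda>j x x'. (\<pi> x = l \<and> x ^ ?n - 1 \<in> ideal_pow ?m (Suc j)) \<longrightarrow>
      (\<pi> x' = \<pi> x \<and> x' - x \<in> ideal_pow ?m (Suc j) \<and> x' ^ ?n - 1 \<in> ideal_pow ?m (Suc (Suc j))))"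
  have ex: "\<exists>x'. P j x x'" for j x
  proof (cases "\<pi> x = l \<and> x ^ ?n - 1 \<in> ideal_pow ?m (Suc j)")
    case True
    hence "\<pi> x \<noteq> 0" using l by simp
    from newton_step[OF C this, of "Suc j"] True obtain x' where
      "\<pi> x' = \<pi> x \<and> x' - x \<in> ideal_pow ?m (Suc j) \<and> x' ^ ?n - 1 \<in> ideal_pow ?m (Suc (Suc j))"
      by auto
    thus ?thesis unfolding P_def by blast
  next
    case False thus ?thesis unfolding P_def by blast
  qed
  define f where "f = (\<lambda>j x. SOME x'. P j x x')"
  have f: "\<pi> (f j x) = \<pi> x \<and> f j x - x \<in> ideal_pow ?m (Suc j) \<and> f j x ^ ?n - 1 \<in> ideal_pow ?m (Suc (Suc j))"
    if "\<pi> x = l" "x ^ ?n - 1 \<in> ideal_pow ?m (Suc j)" for j x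
  proof -
    have "P j x (f j x)" unfolding f_def by (rule someI_ex[OF ex])
    thus ?thesis using that unfolding P_def by blast
  qed
  obtain x0 where x0: "\<pi> x0 = l" using chat_surj[OF C] by blast
  have "x0 ^ ?n - 1 \<in> ?m"
    by (simp add: max_ideal_def rh_diff[OF H] rh_power[OF H] rh_1[OF H] x0 fermat_field[OF l, simplified])
  hence "x0 ^ ?n - 1 \<in> ideal_pow ?m 1" by (rule ideal_pow_1_sup)
  hence x0m: "x0 ^ ?n - 1 \<in> ideal_pow ?m (Suc 0)" by (simp add: One_nat_def)
  define s where "s = rec_nat x0 (\<lambda>j y. f j y)"
  have s0: "s 0 = x0" and sS: "\<And>j. s (Suc j) = f j (s j)" by (simp_all add: s_def)
  have inv: "\<pi> (s j) = l \<and> s j ^ ?n - 1 \<in> ideal_pow ?m (Suc j)" for j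
  proof (induction j)
    case 0 thus ?case using x0 x0m s0 by simp
  next
    case (Suc j) thus ?case using f[of "s j" j] sS by simp
  qed
  have step: "s (Suc j) - s j \<in> ideal_pow ?m (Suc j)" for j
    using f[of "s j" j] inv[of j] sS by simp
  have tele: "s i - s N \<in> ideal_pow ?m N" if "N \<le> i" for N i
    using that
  proof (induction i rule: dec_induct)
    case base thus ?case using is_ideal_pow[of ?m N] by (simp add: is_ideal_def)
  next
    case (step i)
    have "s (Suc i) - s i \<in> ideal_pow ?m N"
      using \<open>s (Suc i) - s i \<in> ideal_pow ?m (Suc i)\<close> ideal_pow_mono[of N "Suc i" ?m] step.hyps by auto
    hence "(s (Suc i) - s i) + (s i - s N) \<in> ideal_pow ?m N"
      using step.IH ideal_add[OF is_ideal_pow] by blast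
    thus ?case by simp
  qed
  have cauchy: "\<forall>n. \<exists>N. \<forall>i\<ge>N. \<forall>j\<ge>N. s i - s j \<in> ideal_pow ?m n"
  proof
    fix n show "\<exists>N. \<forall>i\<ge>N. \<forall>j\<ge>N. s i - s j \<in> ideal_pow ?m n"
    proof (intro exI allI impI)
      fix i j assume "n \<le> i" "n \<le> j"
      hence "(s i - s n) - (s j - s n) \<in> ideal_pow ?m n"
        using tele ideal_diff[OF is_ideal_pow] by blast
      thus "s i - s j \<in> ideal_pow ?m n" by simp
    qed
  qed
  obtain L where L: "\<And>n. \<exists>N. \<forall>i\<ge>N. s i - L \<in> ideal_pow ?m n"
    using chat_compl[OF C] cauchy unfolding adically_complete_def by blast
  have sep: "(\<Inter>n. ideal_pow ?m n) = {0}"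
    using chat_compl[OF C] unfolding adically_complete_def by blast
  have piL: "\<pi> L = l"
  proof -
    obtain N where "\<forall>i\<ge>N. s i - L \<in> ideal_pow ?m 1" using L by blast
    hence "s N - L \<in> ?m" using ideal_pow_1_sub[OF I] by blast
    thus ?thesis using inv[of N] max_ideal_iff[OF H] by simp
  qed
  have "L ^ ?n - 1 \<in> ideal_pow ?m k" for k
  proof -
    obtain N where N: "\<forall>i\<ge>N. s i - L \<in> ideal_pow ?m k" using L by blast
    define i where "i = max N k"
    have a: "s i - L \<in> ideal_pow ?m k" using N by (simp add: i_def)
    have "s i ^ ?n - L ^ ?n = (s i - L) * (\<Sum>t<?n. L ^ (?n - Suc t) * s i ^ t)"
      by (rule power_diff_sumr2)
    hence b: "s i ^ ?n - L ^ ?n \<in> ideal_pow ?m k"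
      using ideal_mult2[OF is_ideal_pow a] by simp
    have "s i ^ ?n - 1 \<in> ideal_pow ?m (Suc i)" using inv by blast
    moreover have "k \<le> Suc i" by (simp add: i_def)
    ultimately have c: "s i ^ ?n - 1 \<in> ideal_pow ?m k" using ideal_pow_mono[of k "Suc i" ?m] by blast
    have "(s i ^ ?n - 1) - (s i ^ ?n - L ^ ?n) \<in> ideal_pow ?m k"
      using ideal_diff[OF is_ideal_pow c b] .
    thus ?thesis by simp
  qed
  hence "L ^ ?n - 1 = 0" using sep by blast
  thus ?thesis using piL by auto
qed

lemma teich_unique:
  fixes \<pi> :: "'a::comm_ring_1 \<Rightarrow> 'k::{field,finite}"
  assumes C: "Chat_obj \<pi>" and b: "b ^ (CARD('k) - 1) = 1" and c: "c ^ (CARD('k) - 1) = 1"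
    and bc: "\<pi> b = \<pi> c"
  shows "b = c"
proof -
  let ?n = "CARD('k) - 1"
  have H: "ring_hom_to \<pi>" using C by (rule chat_hom)
  define S where "S = (\<Sum>t<?n. c ^ (?n - Suc t) * b ^ t)"
  have eq: "b ^ ?n - c ^ ?n = (b - c) * S" unfolding S_def by (rule power_diff_sumr2)
  have "\<pi> b ^ ?n = 1" using b by (metis rh_power[OF H] rh_1[OF H])
  hence nz: "\<pi> b \<noteq> 0" using card_field_ge2[where 'k='k] by (cases "?n") auto
  have "\<pi> S = (\<Sum>t<?n. \<pi> b ^ (?n - Suc t) * \<pi> b ^ t)"
    unfolding S_def by (simp add: rh_sum[OF H] rh_mult[OF H] rh_power[OF H] bc)
  also have "\<dots> = (\<Sum>t<?n. \<pi> b ^ (?n - 1))"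
    by (rule sum.cong) (auto simp: power_add[symmetric] numeral_2_eq_2)
  also have "\<dots> = of_nat ?n * \<pi> b ^ (?n - 1)" by simp
  also have "\<dots> = - (\<pi> b ^ (?n - 1))" by (simp only: of_nat_card_minus1) simp
  finally have "\<pi> S \<noteq> 0" using nz by simp
  then obtain v where v: "S * v = 1" using chat_unit[OF C] by blast
  have "(b - c) * S = 0" using eq b c by simp
  hence "(b - c) * S * v = 0" by simp
  hence "b - c = 0" using v by (simp add: mult.assoc)
  thus ?thesis by simp
qed



section \<open>Teichmueller lifts\<close>

definition teich :: "('a::comm_ring_1 \<Rightarrow> 'k::{field,finite}) \<Rightarrow> 'k \<Rightarrow> 'a" where
  "teich \<pi> l = (THE b. b ^ (CARD('k) - 1) = 1 \<and> \<pi> b = l)"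

lemma teich_ex1:
  fixes \<pi> :: "'a::comm_ring_1 \<Rightarrow> 'k::{field,finite}"
  assumes C: "Chat_obj \<pi>" and l: "l \<noteq> 0"
  shows "\<exists>!b. b ^ (CARD('k) - 1) = 1 \<and> \<pi> b = l"
  using teich_exists[OF C l] teich_unique[OF C] by metis

lemma teich_props:
  fixes \<pi> :: "'a::comm_ring_1 \<Rightarrow> 'k::{field,finite}"
  assumes C: "Chat_obj \<pi>" and l: "l \<noteq> 0"
  shows "teich \<pi> l ^ (CARD('k) - 1) = 1 \<and> \<pi> (teich \<pi> l) = l"
  unfolding teich_def by (rule theI'[OF teich_ex1[OF C l]])

lemma teich_eq:
  fixes \<pi> :: "'a::comm_ring_1 \<Rightarrow> 'k::{field,finite}"
  assumes C: "Chat_obj \<pi>" and b: "b ^ (CARD('k) - 1) = 1" and l: "\<pi> b = l"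
  shows "teich \<pi> l = b"
proof -
  have H: "ring_hom_to \<pi>" using C by (rule chat_hom)
  have "l ^ (CARD('k) - 1) = 1" using b l by (metis rh_power[OF H] rh_1[OF H])
  hence "l \<noteq> 0" using card_field_ge2[where 'k='k] by (cases "CARD('k) - 1") auto
  thus ?thesis unfolding teich_def using teich_ex1[OF C] b l by (intro the1_equality) auto
qed

lemma teich_nz:
  fixes \<pi> :: "'a::comm_ring_1 \<Rightarrow> 'k::{field,finite}"
  assumes C: "Chat_obj \<pi>" and b: "b ^ (CARD('k) - 1) = 1"
  shows "\<pi> b \<noteq> 0"
proof -
  have H: "ring_hom_to \<pi>" using C by (rule chat_hom)
  have "\<pi> b ^ (CARD('k) - 1) = 1" using b by (metis rh_power[OF H] rh_1[OF H])
  thus ?thesis using card_field_ge2[where 'k='k] by (cases "CARD('k) - 1") auto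
qed

lemma teich_mult:
  fixes \<pi> :: "'a::comm_ring_1 \<Rightarrow> 'k::{field,finite}"
  assumes C: "Chat_obj \<pi>" and l: "l \<noteq> 0" and m: "m \<noteq> 0"
  shows "teich \<pi> (l * m) = teich \<pi> l * teich \<pi> m"
proof -
  have H: "ring_hom_to \<pi>" using C by (rule chat_hom)
  show ?thesis
    using teich_props[OF C l] teich_props[OF C m]
    by (intro teich_eq[OF C]) (simp_all add: power_mult_distrib rh_mult[OF H])
qed

lemma teich_1:
  fixes \<pi> :: "'a::comm_ring_1 \<Rightarrow> 'k::{field,finite}"
  assumes C: "Chat_obj \<pi>" shows "teich \<pi> 1 = 1"
  using chat_hom[OF C] by (intro teich_eq[OF C]) (simp_all add: rh_1)

lemma teich_inv:
  fixes \<pi> :: "'a::comm_ring_1 \<Rightarrow> 'k::{field,finite}"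
  assumes C: "Chat_obj \<pi>" and l: "l \<noteq> 0"
  shows "teich \<pi> l * teich \<pi> (inverse l) = 1"
  using teich_mult[OF C l, of "inverse l"] l teich_1[OF C] by simp

lemma ring_inv_eq: "x * y = 1 \<Longrightarrow> ring_inv x = (y::'a::comm_ring_1)"
  unfolding ring_inv_def
proof (rule the_equality)
  fix z assume "x * y = 1" "x * z = 1"
  hence "y * (x * z) = y" by simp
  thus "z = y" using \<open>x * y = 1\<close> by (simp add: mult.assoc[symmetric] mult.commute)
qed

lemma teich_transfer_eq: "teich_transfer \<pi>R \<pi>S a = teich \<pi>S (\<pi>R a)"
  by (simp add: teich_transfer_def teich_def mu_def)

lemma two_neq: "(1::2) \<noteq> 2" by simp

lemma mat2_eq: "(A::'a^2^2) = B \<longleftrightarrow> A$1$1 = B$1$1 \<and> A$1$2 = B$1$2 \<and> A$2$1 = B$2$1 \<and> A$2$2 = B$2$2"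
  by (auto simp: vec_eq_iff forall_2)

lemma mult2_entry: "((A::'a::semiring_1^2^2) ** B) $ i $ j = A$i$1 * B$1$j + A$i$2 * B$2$j"
  by (simp add: matrix_matrix_mult_def sum_2)

lemma diag2_entries: "diag2 a b $ 1 $ 1 = a" "diag2 a b $ 1 $ 2 = 0" "diag2 a b $ 2 $ 1 = 0" "diag2 a b $ 2 $ 2 = b"
  by (simp_all add: diag2_def)

lemma mat1_entries: "(mat 1 :: 'a::semiring_1^2^2) $ 1 $ 1 = 1" "(mat 1 :: 'a::semiring_1^2^2) $ 1 $ 2 = 0"
  "(mat 1 :: 'a::semiring_1^2^2) $ 2 $ 1 = 0" "(mat 1 :: 'a::semiring_1^2^2) $ 2 $ 2 = 1"
  by (simp_all add: mat_def)

lemma diag2_mult: "diag2 a b ** diag2 c d = diag2 (a * c) (b * d)"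
  by (simp add: mat2_eq mult2_entry diag2_entries)

lemma diag2_one: "diag2 1 1 = (mat 1 :: 'a::comm_ring_1^2^2)"
  by (simp add: mat2_eq diag2_entries mat1_entries)

lemma det_diag2: "det (diag2 a b) = a * b"
  by (simp add: det_2 diag2_entries)

lemma mat_map_entry: "mat_map f A $ i $ j = f (A $ i $ j)"
  by (simp add: mat_map_def)

lemma mat_map_mult: "ring_hom_to \<pi> \<Longrightarrow> mat_map \<pi> ((A::'a::comm_ring_1^2^2) ** (B::'a^2^2)) = mat_map \<pi> A ** mat_map \<pi> B"
  by (simp add: mat2_eq mult2_entry mat_map_entry rh_add rh_mult)

lemma mat_map_diag2: "ring_hom_to \<pi> \<Longrightarrow> mat_map \<pi> (diag2 a b) = diag2 (\<pi> a) (\<pi> b)"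
  by (simp add: mat2_eq mat_map_entry diag2_entries rh_0)

lemma mat_map_one: "ring_hom_to \<pi> \<Longrightarrow> mat_map \<pi> (mat 1 :: 'a::comm_ring_1^2^2) = mat 1"
  by (simp add: mat2_eq mat_map_entry mat1_entries rh_0 rh_1)

lemma matrix_sum_left: "finite S \<Longrightarrow> (A::'a::comm_ring_1^2^2) ** sum f S = sum (\<lambda>x. A ** (f x :: 'a^2^2)) S"
  by (induction S rule: finite_induct) (simp_all add: matrix_add_ldistrib)

lemma matrix_sum_right: "finite S \<Longrightarrow> sum f S ** (A::'a::comm_ring_1^2^2) = sum (\<lambda>x. (f x :: 'a^2^2) ** A) S"
proof (induction S rule: finite_induct)
  case empty thus ?case by simp
next
  case (insert x F)
  have d: "(B + C) ** A = B ** A + C ** A" for B C :: "'a^2^2"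
    by (simp add: mat2_eq mult2_entry algebra_simps)
  show ?case using insert by (simp add: d)
qed

lemma matrix_neg_left: "(- (A::'a::comm_ring_1^2^2)) ** (B::'a^2^2) = - (A ** B)"
  by (simp add: mat2_eq mult2_entry)
lemma matrix_neg_right: "(A::'a::comm_ring_1^2^2) ** (- (B::'a^2^2)) = - (A ** B)"
  by (simp add: mat2_eq mult2_entry)
lemma matrix_diff_left: "((A::'a::comm_ring_1^2^2) - B) ** (C::'a^2^2) = A ** C - B ** C"
  by (simp add: mat2_eq mult2_entry algebra_simps)
lemma matrix_diff_right: "(C::'a::comm_ring_1^2^2) ** ((A::'a^2^2) - B) = C ** A - C ** B"
  by (simp add: mat2_eq mult2_entry algebra_simps)

lemma ideal_sum: "is_ideal J \<Longrightarrow> (\<forall>x\<in>S. f x \<in> J) \<Longrightarrow> sum f S \<in> J"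
  by (induction S rule: infinite_finite_induct) (simp_all add: is_ideal_def)

lemma mat_cong_conj:
  assumes J: "is_ideal J" and c: "mat_cong J A B"
  shows "mat_cong J ((P::'a::comm_ring_1^2^2) ** (A::'a^2^2) ** (Q::'a^2^2)) (P ** B ** Q)"
proof -
  have X: "(A - B) $ i $ j \<in> J" for i j using c by (simp add: mat_cong_def)
  have Y: "(P ** (A - B)) $ i $ j \<in> J" for i j
    unfolding mult2_entry using X J by (intro ideal_add[OF J] ideal_mult[OF J]) auto
  have Z: "(P ** (A - B) ** Q) $ i $ j \<in> J" for i j
    unfolding mult2_entry[of "P ** (A - B)"] using Y J by (intro ideal_add[OF J] ideal_mult2[OF J]) auto
  have "P ** (A - B) ** Q = P ** A ** Q - P ** B ** Q"
    by (simp add: matrix_diff_left matrix_diff_right)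
  thus ?thesis using Z by (simp add: mat_cong_def)
qed

lemma conj_mult:
  assumes "Q ** P = mat 1"
  shows "(P::'a::comm_ring_1^2^2) ** (X::'a^2^2) ** (Q::'a^2^2) ** (P ** (Y::'a^2^2) ** Q) = P ** (X ** Y) ** Q"
proof -
  have "P ** X ** Q ** (P ** Y ** Q) = (P ** X) ** (Q ** P) ** (Y ** Q)"
    by (simp only: matrix_mul_assoc)
  also have "\<dots> = (P ** X) ** (Y ** Q)" using assms by simp
  also have "\<dots> = P ** (X ** Y) ** Q" by (simp only: matrix_mul_assoc)
  finally show ?thesis .
qed

lemma inverse2:
  fixes \<pi> :: "'a::comm_ring_1 \<Rightarrow> 'k::{field,finite}"
  assumes C: "Chat_obj \<pi>" and P: "mat_map \<pi> (P::'a^2^2) = mat 1"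
  shows "\<exists>Q. P ** Q = mat 1 \<and> Q ** P = mat 1 \<and> mat_map \<pi> Q = mat 1"
proof -
  have H: "ring_hom_to \<pi>" using C by (rule chat_hom)
  have e: "\<pi> (P$1$1) = 1" "\<pi> (P$1$2) = 0" "\<pi> (P$2$1) = 0" "\<pi> (P$2$2) = 1"
    using P by (simp_all add: mat2_eq mat_map_entry mat1_entries)
  have "\<pi> (P$1$1 * P$2$2 - P$1$2 * P$2$1) = 1" by (simp add: rh_diff[OF H] rh_mult[OF H] e)
  then obtain v where v: "(P$1$1 * P$2$2 - P$1$2 * P$2$1) * v = 1" using chat_unit[OF C] by force
  define Q :: "'a^2^2" where "Q = (\<chi> i j. if i = 1 \<and> j = 1 then v * P$2$2 else if i = 1 \<and> j = 2 then - (v * P$1$2)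
       else if i = 2 \<and> j = 1 then - (v * P$2$1) else v * P$1$1)"
  have q: "Q$1$1 = v * P$2$2" "Q$1$2 = - (v * P$1$2)" "Q$2$1 = - (v * P$2$1)" "Q$2$2 = v * P$1$1"
    by (simp_all add: Q_def)
  have v': "v * (P$1$1 * P$2$2) - v * (P$1$2 * P$2$1) = 1" using v by (simp add: algebra_simps)
  have PQ: "P ** Q = mat 1"
    using v' by (simp add: mat2_eq mult2_entry q mat1_entries algebra_simps)
  have QP: "Q ** P = mat 1"
    using v' by (simp add: mat2_eq mult2_entry q mat1_entries algebra_simps)
  have "mat_map \<pi> Q = mat_map \<pi> Q ** mat_map \<pi> P" using P by simp
  also have "\<dots> = mat 1" using QP by (simp add: mat_map_mult[OF H, symmetric] mat_map_one[OF H])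
  finally show ?thesis using PQ QP by blast
qed



theorem mainTheorem18:
  fixes \<pi>R :: "'r::comm_ring_1 \<Rightarrow> 'k::{field,finite}"
    and \<pi>S :: "'s::comm_ring_1 \<Rightarrow> 'k"
    and \<rho> :: "'r^2^2 \<Rightarrow> 's^2^2"
  assumes "Chat_obj \<pi>R"
    and "Chat_obj \<pi>S"
    and "is_lift \<pi>R \<pi>S \<rho>"
  shows "\<exists>\<rho>'. is_lift \<pi>R \<pi>S \<rho>' \<and> strictly_equiv \<pi>S \<rho> \<rho>' \<and>
           (\<forall>a \<in> (mu TYPE('k) :: 'r set).
              \<rho>' (diag2 a (ring_inv a)) =
                diag2 (teich_transfer \<pi>R \<pi>S a) (ring_inv (teich_transfer \<pi>R \<pi>S a)))"
proof -
  have CR: "Chat_obj \<pi>R" and CS: "Chat_obj \<pi>S" using assms by simp_all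
  have HR: "ring_hom_to \<pi>R" using CR by (rule chat_hom)
  have HS: "ring_hom_to \<pi>S" using CS by (rule chat_hom)
  have rGL: "\<And>g. g \<in> SL2 \<Longrightarrow> \<rho> g \<in> GL2"
    and rhom: "\<And>g h. g \<in> SL2 \<Longrightarrow> h \<in> SL2 \<Longrightarrow> \<rho> (g ** h) = \<rho> g ** \<rho> h"
    and rcont: "\<And>g n. g \<in> SL2 \<Longrightarrow> \<exists>m. \<forall>h\<in>SL2. mat_cong (ideal_pow (max_ideal \<pi>R) m) h g \<longrightarrow>
         mat_cong (ideal_pow (max_ideal \<pi>S) n) (\<rho> h) (\<rho> g)"
    and rred: "\<And>g. g \<in> SL2 \<Longrightarrow> mat_map \<pi>S (\<rho> g) = mat_map \<pi>R g"
    using assms(3) unfolding is_lift_def by blast+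
  define t :: "'k \<Rightarrow> 'r^2^2" where "t = (\<lambda>l. diag2 (teich \<pi>R l) (teich \<pi>R (inverse l)))"
  define D :: "'k \<Rightarrow> 's^2^2" where "D = (\<lambda>l. diag2 (teich \<pi>S l) (teich \<pi>S (inverse l)))"
  define U where "U = {l::'k. l \<noteq> 0}"
  have tSL: "t l \<in> SL2" if "l \<noteq> 0" for l
    using teich_inv[OF CR that] by (simp add: t_def SL2_def det_diag2)
  have tmult: "t l ** t m = t (l * m)" if "l \<noteq> 0" "m \<noteq> 0" for l m
    using that by (simp add: t_def diag2_mult teich_mult[OF CR] inverse_mult_distrib)
  have Dmult: "D l ** D m = D (l * m)" if "l \<noteq> 0" "m \<noteq> 0" for l m
    using that by (simp add: D_def diag2_mult teich_mult[OF CS] inverse_mult_distrib)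
  have rt: "\<rho> (t l) ** \<rho> (t m) = \<rho> (t (l * m))" if "l \<noteq> 0" "m \<noteq> 0" for l m
    using rhom[OF tSL[OF that(1)] tSL[OF that(2)]] tmult[OF that] by simp
  define S0 where "S0 = (\<Sum>l\<in>U. D (inverse l) ** \<rho> (t l))"
  define P where "P = - S0"
  have key1: "D m ** S0 = S0 ** \<rho> (t m)" if m: "m \<noteq> 0" for m
  proof -
    define g where "g = (\<lambda>v. D (m * inverse v) ** \<rho> (t v))"
    have "D m ** S0 = (\<Sum>l\<in>U. D m ** (D (inverse l) ** \<rho> (t l)))"
      unfolding S0_def by (simp add: matrix_sum_left U_def)
    also have "\<dots> = (\<Sum>l\<in>U. g l)"
      by (rule sum.cong) (auto simp: g_def U_def matrix_mul_assoc Dmult m)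
    also have "\<dots> = (\<Sum>l\<in>U. g (l * m))"
      by (rule sum.reindex_bij_witness[of _ "\<lambda>l. l * m" "\<lambda>v. v / m"]) (use m in \<open>auto simp: U_def\<close>)
    also have "\<dots> = (\<Sum>l\<in>U. D (inverse l) ** \<rho> (t l) ** \<rho> (t m))"
    proof (rule sum.cong)
      fix l assume l: "l \<in> U"
      have eq: "m * inverse (l * m) = inverse l" using m l by (simp add: U_def field_simps)
      have "g (l * m) = D (inverse l) ** \<rho> (t (l * m))" unfolding g_def eq ..
      also have "\<dots> = D (inverse l) ** \<rho> (t l) ** \<rho> (t m)"
        using l m by (simp add: U_def rt matrix_mul_assoc[symmetric])
      finally show "g (l * m) = D (inverse l) ** \<rho> (t l) ** \<rho> (t m)" .
    qed simp
    also have "\<dots> = S0 ** \<rho> (t m)"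
      unfolding S0_def by (simp add: matrix_sum_right U_def)
    finally show ?thesis .
  qed
  have term1: "mat_map \<pi>S (D (inverse l) ** \<rho> (t l)) = mat 1" if l: "l \<noteq> 0" for l
  proof -
    have il: "inverse l \<noteq> 0" using l by simp
    have "mat_map \<pi>S (D (inverse l) ** \<rho> (t l)) = mat_map \<pi>S (D (inverse l)) ** mat_map \<pi>R (t l)"
      by (simp add: mat_map_mult[OF HS] rred[OF tSL[OF l]])
    also have "\<dots> = diag2 (inverse l) l ** diag2 l (inverse l)"
      using teich_props[OF CS il] teich_props[OF CS l] teich_props[OF CR il] teich_props[OF CR l]
      by (simp add: D_def t_def mat_map_diag2[OF HS] mat_map_diag2[OF HR])
    also have "\<dots> = mat 1" using l by (simp add: diag2_mult diag2_one)
    finally show ?thesis .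
  qed
  have cardU: "of_nat (card U) = (-1::'k)"
  proof -
    have "U = UNIV - {0}" by (auto simp: U_def)
    hence "card U = CARD('k) - 1" by (simp add: card_Diff_subset)
    thus ?thesis using of_nat_card_minus1 by simp
  qed
  have key2: "mat_map \<pi>S P = mat 1"
  proof -
    have "mat_map \<pi>S P $ i $ j = mat 1 $ i $ j" for i j
    proof -
      have "mat_map \<pi>S P $ i $ j = - (\<Sum>l\<in>U. \<pi>S ((D (inverse l) ** \<rho> (t l)) $ i $ j))"
        by (simp add: P_def S0_def mat_map_entry rh_uminus[OF HS] rh_sum[OF HS])
      also have "\<dots> = - (\<Sum>l\<in>U. mat 1 $ i $ j)"
      proof -
        have "(\<Sum>l\<in>U. \<pi>S ((D (inverse l) ** \<rho> (t l)) $ i $ j)) = (\<Sum>l\<in>U. mat 1 $ i $ j)"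
        proof (rule sum.cong)
          fix l assume "l \<in> U"
          hence "mat_map \<pi>S (D (inverse l) ** \<rho> (t l)) $ i $ j = mat 1 $ i $ j"
            using term1 by (simp add: U_def)
          thus "\<pi>S ((D (inverse l) ** \<rho> (t l)) $ i $ j) = mat 1 $ i $ j" by (simp add: mat_map_entry)
        qed simp
        thus ?thesis by simp
      qed
      also have "\<dots> = mat 1 $ i $ j" using cardU by simp
      finally show ?thesis .
    qed
    thus ?thesis by (simp add: vec_eq_iff)
  qed
  obtain Q where PQ: "P ** Q = mat 1" and QP: "Q ** P = mat 1" and Q1: "mat_map \<pi>S Q = mat 1"
    using inverse2[OF CS key2] by blast
  define \<rho>' where "\<rho>' = (\<lambda>g. P ** \<rho> g ** Q)"
  have lift': "is_lift \<pi>R \<pi>S \<rho>'"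
    unfolding is_lift_def
  proof (intro conjI ballI allI)
    fix g :: "'r^2^2" assume g: "g \<in> SL2"
    obtain B where B1: "\<rho> g ** B = mat 1" and B2: "B ** \<rho> g = mat 1"
      using rGL[OF g] unfolding GL2_def invertible_def by blast
    have "\<rho>' g ** (P ** B ** Q) = mat 1"
      unfolding \<rho>'_def conj_mult[OF QP] B1 using PQ by simp
    moreover have "(P ** B ** Q) ** \<rho>' g = mat 1"
      unfolding \<rho>'_def conj_mult[OF QP] B2 using PQ by simp
    ultimately show "\<rho>' g \<in> GL2" unfolding GL2_def invertible_def by blast
  next
    fix g h :: "'r^2^2" assume g: "g \<in> SL2" and h: "h \<in> SL2"
    show "\<rho>' (g ** h) = \<rho>' g ** \<rho>' h"
      unfolding \<rho>'_def conj_mult[OF QP] rhom[OF g h] ..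
  next
    fix g :: "'r^2^2" and n assume g: "g \<in> SL2"
    obtain m where m: "\<forall>h\<in>SL2. mat_cong (ideal_pow (max_ideal \<pi>R) m) h g \<longrightarrow>
         mat_cong (ideal_pow (max_ideal \<pi>S) n) (\<rho> h) (\<rho> g)" using rcont[OF g] by blast
    show "\<exists>m. \<forall>h\<in>SL2. mat_cong (ideal_pow (max_ideal \<pi>R) m) h g \<longrightarrow>
         mat_cong (ideal_pow (max_ideal \<pi>S) n) (\<rho>' h) (\<rho>' g)"
      unfolding \<rho>'_def using m mat_cong_conj[OF is_ideal_pow] by blast
  next
    fix g :: "'r^2^2" assume g: "g \<in> SL2"
    show "mat_map \<pi>S (\<rho>' g) = mat_map \<pi>R g"
      unfolding \<rho>'_def by (simp add: mat_map_mult[OF HS] key2 Q1 rred[OF g])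
  qed
  have strict: "strictly_equiv \<pi>S \<rho> \<rho>'"
    unfolding strictly_equiv_def
  proof (intro exI conjI)
    show "mat_cong (max_ideal \<pi>S) P (mat 1)"
      unfolding mat_cong_def max_ideal_iff[OF HS]
      using key2 by (simp add: vec_eq_iff mat_map_entry mat_def rh_1[OF HS] rh_0[OF HS])
  qed (use PQ QP \<rho>'_def in auto)
  have rt': "\<rho>' (t l) = D l" if l: "l \<noteq> 0" for l
  proof -
    have "P ** \<rho> (t l) = D l ** P"
      unfolding P_def matrix_neg_left matrix_neg_right key1[OF l] ..
    hence "\<rho>' (t l) = D l ** P ** Q" by (simp add: \<rho>'_def)
    also have "\<dots> = D l" by (simp add: matrix_mul_assoc[symmetric] PQ)
    finally show ?thesis .
  qed
  have fin: "\<rho>' (diag2 a (ring_inv a)) =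
                diag2 (teich_transfer \<pi>R \<pi>S a) (ring_inv (teich_transfer \<pi>R \<pi>S a))"
    if a: "a \<in> (mu TYPE('k) :: 'r set)" for a
  proof -
    define l where "l = \<pi>R a"
    have an: "a ^ (CARD('k) - 1) = 1" using a by (simp add: mu_def)
    have l0: "l \<noteq> 0" unfolding l_def by (rule teich_nz[OF CR an])
    have ta: "teich \<pi>R l = a" unfolding l_def by (rule teich_eq[OF CR an refl])
    have "ring_inv a = teich \<pi>R (inverse l)"
      using teich_inv[OF CR l0] ta by (intro ring_inv_eq) simp
    hence "diag2 a (ring_inv a) = t l" using ta by (simp add: t_def)
    moreover have "ring_inv (teich \<pi>S l) = teich \<pi>S (inverse l)"
      by (rule ring_inv_eq[OF teich_inv[OF CS l0]])
    ultimately show ?thesis using rt'[OF l0] by (simp add: teich_transfer_eq l_def[symmetric] D_def)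
  qed
  show ?thesis using lift' strict fin by blast
qed

end
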